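(* Suppose $\rho\in\mathcal{P}$. Then there is a positive constant $C_{10}$ such that $|V_m(x,y)|\le C_{10}$ for all $(x,y)$ with $x>a+\max\{d_1,4a\}$ and for all $0<\delta\le\delta_{\psi^-}$.
   Context: Fix $a>0$. For $0<\delta<1$ and constants $\beta>0$, $\lambda\in\mathbb{R}$ ($\lambda$ feasible: $\lambda>0$ if $0<\beta<1$, $\lambda\ge-1$ if $\beta=1$, $\lambda\ne0$ if $\beta>1$), put $\mu=\delta+\lambda\delta^{\beta}$, and let $\delta_\mu\in(0,1)$ be a number with $\mu\ge0$ for $0<\delta\le\delta_\mu$. The dielectric constant is $\varepsilon_c=1+\mathrm{i}\mu$ for $x<0$, $\varepsilon_s=-1+\mathrm{i}\delta$ for $0\le x\le a$, $\varepsilon_m=1$ for $x>a$. Let $\mathcal{M}=\{(x,y)\in\mathbb{R}^2:x>a\}$. $\mathcal{P}$ is the set of real-valued $\rho\in L^2(\mathcal{M})\cap L^\infty(\mathcal{M})$ with compact support in $\mathcal{M}$, $0<|\operatorname{supp}\rho|<\infty$ and $\int\!\!\int\rho=0$; $\rho$ is extended by $0$. $d_0,d_1$ are the minimal and maximal $x$-coordinates of $\operatorname{supp}\rho$. Fourier transform in $y$: $\widehat f(x,k)=\int f(x,y)\mathrm{e}^{-\mathrm{i}ky}\mathrm{d}y$; $I_k=\int_{d_0}^{d_1}\widehat\rho(s,k)\mathrm{e}^{-|k|s}\mathrm{d}s$. Let $\chi_c=\varepsilon_s/\varepsilon_c$, $\psi_k^+=\frac{1}{2\chi_c}[(\chi_c+1)\mathrm{e}^{|k|a}+(\chi_c-1)\mathrm{e}^{-|k|a}]$,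 $\psi_k^-=\frac{|k|\varepsilon_s}{2\chi_c}[(\chi_c+1)\mathrm{e}^{|k|a}-(\chi_c-1)\mathrm{e}^{-|k|a}]$, $A_k=I_k/(\mathrm{e}^{-|k|a}(|k|\psi_k^++\psi_k^-))$. $\delta_{\psi^-}=\delta_{\psi^-}(\beta,\lambda)\in(0,\delta_\mu]$ is a number such that $|\psi_k^+-\psi_k^-/|k||^2\le\frac52(\delta+\mu)^2\mathrm{e}^{2|k|a}$ for all $k\ne0$ and all $0<\delta\le\delta_{\psi^-}$. The potential $V$ is defined by its $y$-Fourier transform: for $k\ne0$, $\widehat V(x,k)=A_k\mathrm{e}^{|k|x}$ for $x<0$; $\widehat V(x,k)=\frac{A_k}{2\chi_c}[(\chi_c+1)\mathrm{e}^{|k|x}+(\chi_c-1)\mathrm{e}^{-|k|x}]$ for $0\le x\le a$; $\widehat V(x,k)=A_k\psi_k^+\cosh(|k|(x-a))+\frac{A_k\psi_k^-}{|k|}\sinh(|k|(x-a))+\frac1{|k|}\int_a^x\sinh(|k|(x'-x))\widehat\rho(x',k)\mathrm{d}x'$ for $x>a$. It solves $-\nabla\cdot(\varepsilon\nabla V)=\rho$ in $\mathbb{R}^2$ with $V$, $\varepsilon\partial_xV$ continuous across $x=0,a$ and $\partial_xV\to0$ as $|x|\to\infty$. $V_m=V$ restricted to $\{x>a\}$; on $\{x>d_1\}$ it is harmonic and pointwise values refer to its smooth representative. *)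

theory Defs
  imports "HOL-Analysis.Analysis"
begin

definition ess_supp :: "(real \<times> real \<Rightarrow> real) \<Rightarrow> (real \<times> real) set" where
  "ess_supp \<rho> = {p. \<forall>e>0. emeasure lborel {q \<in> ball p e. \<rho> q \<noteq> 0} > 0}"

definition d0 :: "(real \<times> real \<Rightarrow> real) \<Rightarrow> real" where
  "d0 \<rho> = Inf (fst ` ess_supp \<rho>)"

definition d1 :: "(real \<times> real \<Rightarrow> real) \<Rightarrow> real" where
  "d1 \<rho> = Sup (fst ` ess_supp \<rho>)"

text \<open>The class P (rho defined on R^2, extended by 0 outside M = {x > a}).\<close>
definition charge_class :: "real \<Rightarrow> (real \<times> real \<Rightarrow> real) \<Rightarrow> bool" where
  "charge_class a \<rho> \<longleftrightarrow>
     \<rho> \<in> borel_measurable lborel \<and>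
     (\<forall>p. fst p \<le> a \<longrightarrow> \<rho> p = 0) \<and>
     integrable lborel (\<lambda>p. (\<rho> p)\<^sup>2) \<and>
     (\<exists>B. AE p in lborel. \<bar>\<rho> p\<bar> \<le> B) \<and>
     compact (ess_supp \<rho>) \<and> ess_supp \<rho> \<subseteq> {p. fst p > a} \<and>
     0 < emeasure lborel (ess_supp \<rho>) \<and> emeasure lborel (ess_supp \<rho>) < \<infinity> \<and>
     integrable lborel \<rho> \<and> integral\<^sup>L lborel \<rho> = 0"

definition rho_hat :: "(real \<times> real \<Rightarrow> real) \<Rightarrow> real \<Rightarrow> real \<Rightarrow> complex" where
  "rho_hat \<rho> x k = (LINT y|lborel. complex_of_real (\<rho> (x, y)) * cis (- (k * y)))"

definition I_k :: "(real \<times> real \<Rightarrow> real) \<Rightarrow> real \<Rightarrow> complex" where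
  "I_k \<rho> k = (LINT s:{d0 \<rho>..d1 \<rho>}|lborel. rho_hat \<rho> s k * complex_of_real (exp (- \<bar>k\<bar> * s)))"

definition feasible :: "real \<Rightarrow> real \<Rightarrow> bool" where
  "feasible \<beta> lam \<longleftrightarrow> \<beta> > 0 \<and>
     (\<beta> < 1 \<longrightarrow> lam > 0) \<and> (\<beta> = 1 \<longrightarrow> lam \<ge> -1) \<and> (\<beta> > 1 \<longrightarrow> lam \<noteq> 0)"

definition mu :: "real \<Rightarrow> real \<Rightarrow> real \<Rightarrow> real" where
  "mu \<beta> lam \<delta> = \<delta> + lam * \<delta> powr \<beta>"

definition eps_c :: "real \<Rightarrow> real \<Rightarrow> real \<Rightarrow> complex" where
  "eps_c \<beta> lam \<delta> = 1 + \<i> * complex_of_real (mu \<beta> lam \<delta>)"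

definition eps_s :: "real \<Rightarrow> complex" where
  "eps_s \<delta> = -1 + \<i> * complex_of_real \<delta>"

definition chi_c :: "real \<Rightarrow> real \<Rightarrow> real \<Rightarrow> complex" where
  "chi_c \<beta> lam \<delta> = eps_s \<delta> / eps_c \<beta> lam \<delta>"

definition psi_plus :: "real \<Rightarrow> real \<Rightarrow> real \<Rightarrow> real \<Rightarrow> real \<Rightarrow> complex" where
  "psi_plus a \<beta> lam \<delta> k =
     (let chi = chi_c \<beta> lam \<delta> in
       1 / (2 * chi) * ((chi + 1) * complex_of_real (exp (\<bar>k\<bar> * a))
                       + (chi - 1) * complex_of_real (exp (- \<bar>k\<bar> * a))))"

definition psi_minus :: "real \<Rightarrow> real \<Rightarrow> real \<Rightarrow> real \<Rightarrow> real \<Rightarrow> complex" where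
  "psi_minus a \<beta> lam \<delta> k =
     (let chi = chi_c \<beta> lam \<delta> in
       complex_of_real \<bar>k\<bar> * eps_s \<delta> / (2 * chi) *
         ((chi + 1) * complex_of_real (exp (\<bar>k\<bar> * a))
          - (chi - 1) * complex_of_real (exp (- \<bar>k\<bar> * a))))"

definition A_k :: "real \<Rightarrow> real \<Rightarrow> real \<Rightarrow> real \<Rightarrow> (real \<times> real \<Rightarrow> real) \<Rightarrow> real \<Rightarrow> complex" where
  "A_k a \<beta> lam \<delta> \<rho> k =
     I_k \<rho> k / (complex_of_real (exp (- \<bar>k\<bar> * a)) *
                (complex_of_real \<bar>k\<bar> * psi_plus a \<beta> lam \<delta> k + psi_minus a \<beta> lam \<delta> k))"

text \<open>Fourier transform of V in the region x > a (for k \<noteq> 0).\<close>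
definition Vhat_m :: "real \<Rightarrow> real \<Rightarrow> real \<Rightarrow> real \<Rightarrow> (real \<times> real \<Rightarrow> real) \<Rightarrow> real \<Rightarrow> real \<Rightarrow> complex" where
  "Vhat_m a \<beta> lam \<delta> \<rho> x k =
     A_k a \<beta> lam \<delta> \<rho> k * psi_plus a \<beta> lam \<delta> k * complex_of_real (cosh (\<bar>k\<bar> * (x - a)))
     + A_k a \<beta> lam \<delta> \<rho> k * psi_minus a \<beta> lam \<delta> k / complex_of_real \<bar>k\<bar>
         * complex_of_real (sinh (\<bar>k\<bar> * (x - a)))
     + 1 / complex_of_real \<bar>k\<bar> *
         (LINT x':{a..x}|lborel. complex_of_real (sinh (\<bar>k\<bar> * (x' - x))) * rho_hat \<rho> x' k)"

text \<open>V_m(x,y) via the inverse Fourier transform in y (the point k = 0 is a null set).\<close>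
definition V_m :: "real \<Rightarrow> real \<Rightarrow> real \<Rightarrow> real \<Rightarrow> (real \<times> real \<Rightarrow> real) \<Rightarrow> real \<Rightarrow> real \<Rightarrow> complex" where
  "V_m a \<beta> lam \<delta> \<rho> x y =
     1 / complex_of_real (2 * pi) * (LINT k|lborel. Vhat_m a \<beta> lam \<delta> \<rho> x k * cis (k * y))"

end

theory Submission
  imports Defs "HOL-Probability.Sinc_Integral"
begin

lemma cis_minus_one_bound: "cmod (cis t - 1) \<le> \<bar>t\<bar>"
proof -
  have "(cmod (cis t - 1))\<^sup>2 = (cos t - 1)\<^sup>2 + (sin t)\<^sup>2"
    by (simp add: cmod_def cis.code)
  also have "\<dots> = 2 - 2 * cos t" using sin_cos_squared_add[of t]
    by (simp add: power2_eq_square algebra_simps)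
  also have "\<dots> = 4 * (sin (t/2))\<^sup>2" using cos_double_sin[of "t/2"] by simp
  also have "\<dots> = (2 * \<bar>sin (t/2)\<bar>)\<^sup>2" by (simp add: power2_eq_square)
  finally have e: "cmod (cis t - 1) = 2 * \<bar>sin (t/2)\<bar>"
    by (metis abs_of_nonneg norm_ge_zero power2_eq_iff_nonneg zero_le_mult_iff abs_ge_zero zero_le_numeral)
  have "\<bar>sin (t/2)\<bar> \<le> \<bar>t/2\<bar>" by (rule abs_sin_x_le_abs_x)
  thus ?thesis using e by simp
qed

lemma supp_AE:
  assumes "charge_class a \<rho>"
  shows "AE p in lborel. \<rho> p \<noteq> 0 \<longrightarrow> p \<in> ess_supp \<rho>"
proof -
  have meas[measurable]: "\<rho> \<in> borel_measurable lborel" using assms by (simp add: charge_class_def)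
  define F where "F = {ball p e | p e. e > 0 \<and> emeasure lborel {q \<in> ball p e. \<rho> q \<noteq> 0} = 0}"
  obtain F' where F': "F' \<subseteq> F" "countable F'" "\<Union>F' = \<Union>F"
    using Lindelof[of F] unfolding F_def by auto
  have "AE q in lborel. \<forall>B\<in>F'. q \<in> B \<longrightarrow> \<rho> q = 0"
  proof (rule AE_ball_countable')
    fix B assume "B \<in> F'"
    then obtain p e where B: "B = ball p e" "emeasure lborel {q \<in> ball p e. \<rho> q \<noteq> 0} = 0"
      using F' F_def by auto
    have "{q \<in> ball p e. \<rho> q \<noteq> 0} \<in> sets lborel" by measurable
    hence "{q \<in> ball p e. \<rho> q \<noteq> 0} \<in> null_sets lborel" using B by (simp add: null_sets_def)
    thus "AE q in lborel. q \<in> B \<longrightarrow> \<rho> q = 0"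
      by (rule AE_I'[of "{q \<in> ball p e. \<rho> q \<noteq> 0}"]) (auto simp: B)
  qed (rule F')
  thus ?thesis
  proof (rule AE_mp, intro AE_I2 impI)
    fix q assume h: "\<forall>B\<in>F'. q \<in> B \<longrightarrow> \<rho> q = 0" and nz: "\<rho> q \<noteq> 0"
    show "q \<in> ess_supp \<rho>"
    proof (rule ccontr)
      assume "q \<notin> ess_supp \<rho>"
      then obtain e where "e > 0" "\<not> emeasure lborel {x \<in> ball q e. \<rho> x \<noteq> 0} > 0"
        by (auto simp: ess_supp_def)
      hence "ball q e \<in> F" unfolding F_def
        by (intro CollectI exI[of _ q] exI[of _ e]) (auto simp: ball_def)
      hence "q \<in> \<Union>F" using \<open>e>0\<close> by (intro UnionI[of "ball q e"]) auto
      hence "q \<in> \<Union>F'" using F' by simp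
      thus False using h nz by auto
    qed
  qed
qed

lemma supp_geom:
  assumes "charge_class a \<rho>"
  shows "ess_supp \<rho> \<noteq> {}" "\<And>p. p \<in> ess_supp \<rho> \<Longrightarrow> d0 \<rho> \<le> fst p \<and> fst p \<le> d1 \<rho>"
    "a < d0 \<rho>" "d0 \<rho> \<le> d1 \<rho>" "\<exists>Y. \<forall>p\<in>ess_supp \<rho>. \<bar>snd p\<bar> \<le> Y"
proof -
  let ?S = "ess_supp \<rho>"
  have cS: "compact ?S" and sub: "?S \<subseteq> {p. fst p > a}" and pos: "0 < emeasure lborel ?S"
    using assms by (auto simp: charge_class_def)
  show ne: "?S \<noteq> {}" using pos by auto
  have cf: "compact (fst ` ?S)" by (intro compact_continuous_image continuous_intros cS)
  have cs: "compact (snd ` ?S)" by (intro compact_continuous_image continuous_intros cS)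
  have bb: "bdd_below (fst ` ?S)" "bdd_above (fst ` ?S)"
    using cf by (auto intro: bounded_imp_bdd_below bounded_imp_bdd_above compact_imp_bounded)
  show le: "\<And>p. p \<in> ?S \<Longrightarrow> d0 \<rho> \<le> fst p \<and> fst p \<le> d1 \<rho>"
    unfolding d0_def d1_def using bb by (auto intro: cInf_lower cSup_upper)
  obtain s where s: "s \<in> fst ` ?S" "\<forall>t\<in>fst ` ?S. s \<le> t"
    using compact_attains_inf[OF cf] ne by auto
  have "d0 \<rho> = s" unfolding d0_def using s by (intro cInf_eq_minimum) auto
  moreover have "s > a" using s sub by auto
  ultimately show "a < d0 \<rho>" by simp
  from ne obtain p where "p \<in> ?S" by auto
  thus "d0 \<rho> \<le> d1 \<rho>" using le[of p] by linarith
  obtain B where "\<forall>x\<in>snd ` ?S. norm x \<le> B" using compact_imp_bounded[OF cs] bounded_iff by metis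
  thus "\<exists>Y. \<forall>p\<in>?S. \<bar>snd p\<bar> \<le> Y" by auto
qed

lemma S_lower:
  assumes d: "0 < \<delta>" "\<delta> < 1" and m: "0 \<le> mu \<beta> lam \<delta>" and k: "k \<noteq> 0"
  shows "exp (- \<bar>k\<bar> * a) \<le> cmod (psi_plus a \<beta> lam \<delta> k + psi_minus a \<beta> lam \<delta> k / complex_of_real \<bar>k\<bar>)"
proof -
  define m where "m = mu \<beta> lam \<delta>"
  define es where "es = eps_s \<delta>"
  define ec where "ec = eps_c \<beta> lam \<delta>"
  define E where "E = exp (\<bar>k\<bar> * a)"
  define E' where "E' = exp (- \<bar>k\<bar> * a)"
  have es: "es = Complex (-1) \<delta>" unfolding es_def eps_s_def by (simp add: complex_eq_iff)
  have ec: "ec = Complex 1 m" unfolding ec_def eps_c_def m_def by (simp add: complex_eq_iff)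
  have esnz: "es \<noteq> 0" and ecnz: "ec \<noteq> 0" using es ec by (auto simp: complex_eq_iff)
  define D where "D = (es + ec) * (1 + es) * complex_of_real E + (es - ec) * (1 - es) * complex_of_real E'"
  have kz: "complex_of_real \<bar>k\<bar> \<noteq> 0" using k by simp
  have key: "(psi_plus a \<beta> lam \<delta> k + psi_minus a \<beta> lam \<delta> k / complex_of_real \<bar>k\<bar>) * (2 * es) = D"
    unfolding psi_plus_def psi_minus_def Let_def chi_c_def D_def E_def E'_def
      es_def[symmetric] ec_def[symmetric]
    using esnz ecnz kz by (simp add: field_simps)
  have ReD: "Re D = - \<delta> * (\<delta> + m) * E + (-4 + \<delta> * (\<delta> - m)) * E'"
    unfolding D_def es ec by (simp add: algebra_simps)
  have Ep: "E \<ge> 0" "E' > 0" unfolding E_def E'_def by auto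
  have "\<delta> * \<delta> < \<delta> * 1" using d by (intro mult_strict_left_mono) auto
  hence dd: "\<delta> * \<delta> < 1" using d by linarith
  have dm: "\<delta> * m \<ge> 0" using d m unfolding m_def by auto
  have f1: "E' * (\<delta> * \<delta>) \<le> E'" using mult_left_le[of "\<delta>*\<delta>" E'] dd Ep by linarith
  have f2: "E' * (\<delta> * m) \<ge> 0" "E * (\<delta> * \<delta>) \<ge> 0" "E * (\<delta> * m) \<ge> 0" using dm Ep d by (auto intro: mult_nonneg_nonneg)
  have "Re D = -(E*(\<delta>*\<delta>)) - E*(\<delta>*m) - 4*E' + E'*(\<delta>*\<delta>) - E'*(\<delta>*m)"
    unfolding ReD by (simp add: algebra_simps)
  hence "Re D \<le> -3 * E'" using f1 f2 by linarith
  hence D3: "cmod D \<ge> 3 * E'" using abs_Re_le_cmod[of D] by linarith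
  have "cmod es = sqrt (1 + \<delta>\<^sup>2)" unfolding es by (simp add: cmod_def)
  also have "\<dots> \<le> sqrt 2" using d by (intro real_sqrt_le_mono) (use dd in \<open>simp add: power2_eq_square\<close>)
  also have "\<dots> \<le> 3/2" by (rule real_le_lsqrt) (auto simp: power2_eq_square)
  finally have es32: "cmod es \<le> 3/2" .
  have "cmod D = cmod (psi_plus a \<beta> lam \<delta> k + psi_minus a \<beta> lam \<delta> k / complex_of_real \<bar>k\<bar>) * (2 * cmod es)"
    using key[symmetric] by (simp add: norm_mult)
  also have "\<dots> \<le> cmod (psi_plus a \<beta> lam \<delta> k + psi_minus a \<beta> lam \<delta> k / complex_of_real \<bar>k\<bar>) * 3"
    using es32 by (intro mult_left_mono) auto
  finally show ?thesis using D3 unfolding E'_def by linarith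
qed

definition Phi :: "(real \<times> real \<Rightarrow> real) \<Rightarrow> real \<Rightarrow> (real \<Rightarrow> real) \<Rightarrow> complex" where
  "Phi \<rho> k w = (LINT p|lborel. complex_of_real (\<rho> p * w (fst p)) * cis (- (k * snd p)))"

lemma cis_meas[measurable]: "(\<lambda>p::real\<times>real. cis (- (k * snd p))) \<in> borel_measurable lborel"
  unfolding measurable_lborel2 by (intro borel_measurable_continuous_onI continuous_intros)

lemma wfst_meas[measurable]:
  assumes "w \<in> borel_measurable borel"
  shows "(\<lambda>p::real\<times>real. w (fst p)) \<in> borel_measurable lborel"
proof -
  have "(fst :: real\<times>real \<Rightarrow> real) \<in> borel_measurable borel"
    by (intro borel_measurable_continuous_onI continuous_intros)
  from measurable_compose[OF this assms] show ?thesis unfolding measurable_lborel2 by (simp add: o_def)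
qed

lemma Phi_meas:
  fixes w :: "real \<Rightarrow> real" and \<rho> :: "real \<times> real \<Rightarrow> real"
  assumes rm: "\<rho> \<in> borel_measurable lborel" and wm: "w \<in> borel_measurable borel"
  shows "(\<lambda>p. complex_of_real (\<rho> p * w (fst p)) * cis (- (k * snd p))) \<in> borel_measurable lborel"
proof -
  have "(\<lambda>p. \<rho> p * w (fst p)) \<in> borel_measurable lborel"
    using rm wfst_meas[OF wm] by (rule borel_measurable_times)
  from measurable_compose[OF this borel_measurable_of_real]
  have "(\<lambda>p. complex_of_real (\<rho> p * w (fst p))) \<in> borel_measurable lborel" by (simp add: o_def)
  thus ?thesis by (intro borel_measurable_times cis_meas)
qed

lemma Phi_int:
  assumes "charge_class a \<rho>" and wm[measurable]: "w \<in> borel_measurable borel" and wb: "\<forall>s. \<bar>w s\<bar> \<le> B"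
  shows "integrable lborel (\<lambda>p. complex_of_real (\<rho> p * w (fst p)) * cis (- (k * snd p)))"
proof -
  have rm[measurable]: "\<rho> \<in> borel_measurable lborel" and ri: "integrable lborel \<rho>"
    using assms by (auto simp: charge_class_def)
  have i1: "integrable lborel (\<lambda>p. B * \<rho> p)" using ri by simp
  have m1: "(\<lambda>p. complex_of_real (\<rho> p * w (fst p)) * cis (- (k * snd p))) \<in> borel_measurable lborel"
  proof -
    have "(\<lambda>p. \<rho> p * w (fst p)) \<in> borel_measurable lborel"
      using rm wfst_meas[OF wm] by (rule borel_measurable_times)
    from measurable_compose[OF this borel_measurable_of_real]
    have "(\<lambda>p. complex_of_real (\<rho> p * w (fst p))) \<in> borel_measurable lborel" by (simp add: o_def)
    thus ?thesis by (intro borel_measurable_times cis_meas)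
  qed
  have ae: "AE p in lborel. norm (complex_of_real (\<rho> p * w (fst p)) * cis (- (k * snd p))) \<le> norm (B * \<rho> p)"
  proof (intro AE_I2)
    fix p :: "real \<times> real"
    have "\<bar>w (fst p)\<bar> \<le> \<bar>B\<bar>" using wb by (meson abs_ge_self order_trans)
    thus "norm (complex_of_real (\<rho> p * w (fst p)) * cis (- (k * snd p))) \<le> norm (B * \<rho> p)"
      by (simp add: norm_mult abs_mult) (metis abs_ge_zero mult.commute mult_left_mono)
  qed
  show ?thesis by (rule Bochner_Integration.integrable_bound[OF i1 m1 ae])
qed

lemma Phi_fubini:
  assumes "charge_class a \<rho>" and wm[measurable]: "w \<in> borel_measurable borel" and wb: "\<forall>s. \<bar>w s\<bar> \<le> B"
  shows "(LINT s|lborel. complex_of_real (w s) * rho_hat \<rho> s k) = Phi \<rho> k w"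
proof -
  let ?f = "\<lambda>p. complex_of_real (\<rho> p * w (fst p)) * cis (- (k * snd p))"
  have i: "integrable (lborel \<Otimes>\<^sub>M lborel) ?f"
    using Phi_int[OF assms] by (simp add: lborel_prod)
  have "Phi \<rho> k w = integral\<^sup>L (lborel \<Otimes>\<^sub>M lborel) ?f" by (simp add: Phi_def lborel_prod)
  also have "\<dots> = (LINT s|lborel. LINT y|lborel. ?f (s, y))"
    by (rule lborel_pair.integral_fst'[OF i, symmetric])
  also have "\<dots> = (LINT s|lborel. complex_of_real (w s) * rho_hat \<rho> s k)"
  proof (rule Bochner_Integration.integral_cong[OF refl])
    fix s
    have "(LINT y|lborel. ?f (s, y)) = (LINT y|lborel. complex_of_real (w s) * (complex_of_real (\<rho> (s, y)) * cis (- (k * y))))"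
      by (intro Bochner_Integration.integral_cong) (auto simp: mult_ac)
    also have "\<dots> = complex_of_real (w s) * rho_hat \<rho> s k"
      unfolding rho_hat_def by (rule integral_mult_right_zero)
    finally show "(LINT y|lborel. ?f (s, y)) = complex_of_real (w s) * rho_hat \<rho> s k" .
  qed
  finally show ?thesis ..
qed

lemma Phi_scale: "Phi \<rho> k (\<lambda>s. c * w s) = complex_of_real c * Phi \<rho> k w"
proof -
  have "Phi \<rho> k (\<lambda>s. c * w s) = (LINT p|lborel. complex_of_real c * (complex_of_real (\<rho> p * w (fst p)) * cis (- (k * snd p))))"
    unfolding Phi_def by (intro Bochner_Integration.integral_cong) (auto simp: mult_ac)
  thus ?thesis unfolding Phi_def by simp
qed

lemma Phi_add:
  assumes "charge_class a \<rho>" "w1 \<in> borel_measurable borel" "\<forall>s. \<bar>w1 s\<bar> \<le> B1"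
    "w2 \<in> borel_measurable borel" "\<forall>s. \<bar>w2 s\<bar> \<le> B2"
  shows "Phi \<rho> k (\<lambda>s. w1 s + w2 s) = Phi \<rho> k w1 + Phi \<rho> k w2"
proof -
  have "Phi \<rho> k (\<lambda>s. w1 s + w2 s) = (LINT p|lborel. complex_of_real (\<rho> p * w1 (fst p)) * cis (- (k * snd p))
     + complex_of_real (\<rho> p * w2 (fst p)) * cis (- (k * snd p)))"
    unfolding Phi_def by (intro Bochner_Integration.integral_cong) (auto simp: algebra_simps)
  also have "\<dots> = Phi \<rho> k w1 + Phi \<rho> k w2" unfolding Phi_def
    by (intro Bochner_Integration.integral_add Phi_int[OF assms(1,2,3)] Phi_int[OF assms(1,4,5)])
  finally show ?thesis .
qed

lemma Phi_cong:
  assumes c: "charge_class a \<rho>" and w1m: "w1 \<in> borel_measurable borel" and w2m: "w2 \<in> borel_measurable borel"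
    and eq: "\<forall>s\<in>{d0 \<rho>..d1 \<rho>}. w1 s = w2 s"
  shows "Phi \<rho> k w1 = Phi \<rho> k w2"
proof -
  have rm: "\<rho> \<in> borel_measurable lborel" using c by (simp add: charge_class_def)
  show ?thesis unfolding Phi_def
  proof (rule integral_cong_AE)
    show "AE p in lborel. complex_of_real (\<rho> p * w1 (fst p)) * cis (- (k * snd p)) =
        complex_of_real (\<rho> p * w2 (fst p)) * cis (- (k * snd p))"
      using supp_AE[OF c]
    proof (rule AE_mp, intro AE_I2 impI)
      fix p assume h: "\<rho> p \<noteq> 0 \<longrightarrow> p \<in> ess_supp \<rho>"
      show "complex_of_real (\<rho> p * w1 (fst p)) * cis (- (k * snd p)) =
        complex_of_real (\<rho> p * w2 (fst p)) * cis (- (k * snd p))"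
      proof (cases "\<rho> p = 0")
        case False
        hence "fst p \<in> {d0 \<rho>..d1 \<rho>}" using h supp_geom(2)[OF c, of p] by auto
        thus ?thesis using eq by simp
      qed simp
    qed
  qed (rule Phi_meas[OF rm w1m], rule Phi_meas[OF rm w2m])
qed

lemma Phi_bound:
  assumes c: "charge_class a \<rho>" and wm[measurable]: "w \<in> borel_measurable borel" and wb: "\<forall>s. \<bar>w s\<bar> \<le> B"
    and w1: "\<forall>s\<in>{d0 \<rho>..d1 \<rho>}. \<bar>w s\<bar> \<le> 1 \<and> \<bar>w s - 1\<bar> \<le> \<bar>k\<bar> * R"
    and Y: "\<forall>p\<in>ess_supp \<rho>. \<bar>snd p\<bar> \<le> Y"
  shows "cmod (Phi \<rho> k w) \<le> \<bar>k\<bar> * (Y + R) * (LINT p|lborel. \<bar>\<rho> p\<bar>)"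
proof -
  have rm[measurable]: "\<rho> \<in> borel_measurable lborel" and ri: "integrable lborel \<rho>"
    and r0: "integral\<^sup>L lborel \<rho> = 0"
    using c by (auto simp: charge_class_def)
  let ?f = "\<lambda>p. complex_of_real (\<rho> p * w (fst p)) * cis (- (k * snd p))"
  let ?g = "\<lambda>p. complex_of_real (\<rho> p) * (complex_of_real (w (fst p)) * cis (- (k * snd p)) - 1)"
  have fi: "integrable lborel ?f" by (rule Phi_int[OF c wm wb])
  have ri': "integrable lborel (\<lambda>p. complex_of_real (\<rho> p))" using ri by simp
  have "(LINT p|lborel. complex_of_real (\<rho> p)) = complex_of_real (integral\<^sup>L lborel \<rho>)" by simp
  hence z: "(LINT p|lborel. complex_of_real (\<rho> p)) = 0" using r0 by simp
  have "Phi \<rho> k w = (LINT p|lborel. ?f p) - (LINT p|lborel. complex_of_real (\<rho> p))"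
    unfolding Phi_def z by simp
  also have "\<dots> = (LINT p|lborel. ?f p - complex_of_real (\<rho> p))"
    by (rule Bochner_Integration.integral_diff[OF fi ri', symmetric])
  also have "\<dots> = (LINT p|lborel. ?g p)"
    by (intro Bochner_Integration.integral_cong) (auto simp: algebra_simps)
  finally have e: "Phi \<rho> k w = (LINT p|lborel. ?g p)" .
  have gi: "integrable lborel ?g"
  proof -
    have "?g = (\<lambda>p. ?f p - complex_of_real (\<rho> p))" by (rule ext) (simp add: algebra_simps)
    thus ?thesis using Bochner_Integration.integrable_diff[OF fi ri'] by simp
  qed
  have "cmod (Phi \<rho> k w) \<le> (LINT p|lborel. cmod (?g p))" unfolding e by (rule integral_norm_bound)
  also have "\<dots> \<le> (LINT p|lborel. \<bar>k\<bar> * (Y + R) * \<bar>\<rho> p\<bar>)"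
  proof (rule integral_mono_AE)
    show "integrable lborel (\<lambda>p. cmod (?g p))" using gi by simp
    show "integrable lborel (\<lambda>p. \<bar>k\<bar> * (Y + R) * \<bar>\<rho> p\<bar>)" using ri by simp
    show "AE p in lborel. cmod (?g p) \<le> \<bar>k\<bar> * (Y + R) * \<bar>\<rho> p\<bar>"
      using supp_AE[OF c]
    proof (rule AE_mp, intro AE_I2 impI)
      fix p assume h: "\<rho> p \<noteq> 0 \<longrightarrow> p \<in> ess_supp \<rho>"
      show "cmod (?g p) \<le> \<bar>k\<bar> * (Y + R) * \<bar>\<rho> p\<bar>"
      proof (cases "\<rho> p = 0")
        case False
        hence ps: "p \<in> ess_supp \<rho>" using h by auto
        hence "fst p \<in> {d0 \<rho>..d1 \<rho>}" using supp_geom(2)[OF c, of p] by auto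
        hence ww: "\<bar>w (fst p)\<bar> \<le> 1" "\<bar>w (fst p) - 1\<bar> \<le> \<bar>k\<bar> * R" using w1 by auto
        have ys: "\<bar>snd p\<bar> \<le> Y" using Y ps by auto
        have "complex_of_real (w (fst p)) * cis (- (k * snd p)) - 1 =
              complex_of_real (w (fst p)) * (cis (- (k * snd p)) - 1) + complex_of_real (w (fst p) - 1)"
          by (simp add: algebra_simps)
        hence "cmod (complex_of_real (w (fst p)) * cis (- (k * snd p)) - 1) \<le>
               cmod (complex_of_real (w (fst p)) * (cis (- (k * snd p)) - 1)) + cmod (complex_of_real (w (fst p) - 1))"
          by (simp only: norm_triangle_ineq)
        also have "\<dots> = \<bar>w (fst p)\<bar> * cmod (cis (- (k * snd p)) - 1) + \<bar>w (fst p) - 1\<bar>"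
          by (simp only: norm_mult norm_of_real)
        also have "\<dots> \<le> 1 * \<bar>k * snd p\<bar> + \<bar>k\<bar> * R"
          using ww cis_minus_one_bound[of "- (k * snd p)"]
          by (intro add_mono mult_mono) auto
        also have "\<dots> \<le> \<bar>k\<bar> * (Y + R)"
          using ys by (simp add: abs_mult distrib_left mult_left_mono)
        finally have "cmod (complex_of_real (w (fst p)) * cis (- (k * snd p)) - 1) \<le> \<bar>k\<bar> * (Y + R)" .
        thus ?thesis by (simp add: norm_mult mult_left_mono mult.commute)
      qed simp
    qed
  qed
  also have "\<dots> = \<bar>k\<bar> * (Y + R) * (LINT p|lborel. \<bar>\<rho> p\<bar>)" by simp
  finally show ?thesis .
qed

lemma vhat_algebra:
  fixes A P Q Ik Fp :: complex and K a x :: real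
  assumes K: "K > 0" and nz: "complex_of_real K * P + Q \<noteq> 0"
    and A: "A = Ik / (complex_of_real (exp (- K * a)) * (complex_of_real K * P + Q))"
  shows "A * P * complex_of_real (cosh (K * (x - a))) + A * Q / complex_of_real K * complex_of_real (sinh (K * (x - a)))
         + 1 / complex_of_real K * (complex_of_real (exp (- K * x) / 2) * Fp + complex_of_real (- (exp (K * x) / 2)) * Ik)
       = A * (P - Q / complex_of_real K) * complex_of_real (exp (- (K * (x - a)))) / 2
         + complex_of_real (exp (- K * x) / (2 * K)) * Fp"
proof -
  define E where "E = exp (K * (x - a))"
  define ea where "ea = exp (K * a)"
  have Ep: "E > 0" "ea > 0" unfolding E_def ea_def by auto
  have e1: "exp (K * x) = E * ea" unfolding E_def ea_def by (simp add: exp_add[symmetric] algebra_simps)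
  have e2: "exp (- K * x) = 1 / (E * ea)" using e1 by (simp add: exp_minus field_simps)
  have e3: "exp (- K * a) = 1 / ea" unfolding ea_def by (simp add: exp_minus field_simps)
  have e4: "exp (- (K * (x - a))) = 1 / E" unfolding E_def by (simp add: exp_minus inverse_eq_divide)
  have ch: "cosh (K * (x - a)) = (E + 1 / E) / 2" unfolding cosh_def E_def by (simp add: exp_minus inverse_eq_divide)
  have sh: "sinh (K * (x - a)) = (E - 1 / E) / 2" unfolding sinh_def E_def by (simp add: exp_minus inverse_eq_divide)
  have Ik: "Ik = A * complex_of_real (1 / ea) * (complex_of_real K * P + Q)"
    using A nz Ep unfolding e3 by (simp add: field_simps)
  have Kz: "complex_of_real K \<noteq> 0" "complex_of_real E \<noteq> 0" "complex_of_real ea \<noteq> 0" using K Ep by auto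
  show ?thesis unfolding ch sh e1 e2 e4 Ik using Kz
    by (simp add: field_simps)
qed

lemma ind_cont_meas:
  fixes g :: "real \<Rightarrow> real"
  assumes "continuous_on UNIV g"
  shows "(\<lambda>s. indicator {c..d} s * g s) \<in> borel_measurable borel"
  by (intro borel_measurable_times borel_measurable_indicator borel_measurable_continuous_onI assms) simp

lemma ind_cont_bound:
  fixes g :: "real \<Rightarrow> real"
  assumes "continuous_on UNIV g"
  shows "\<exists>B. \<forall>s. \<bar>indicator {c..d} s * g s\<bar> \<le> B"
proof -
  have "compact (g ` {c..d})"
    by (rule compact_continuous_image[OF continuous_on_subset[OF assms]]) auto
  then obtain B where B: "\<forall>y\<in>g ` {c..d}. norm y \<le> B" using compact_imp_bounded bounded_iff by metis
  have "\<bar>indicator {c..d} s * g s\<bar> \<le> \<bar>B\<bar>" for s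
    using B by (cases "s \<in> {c..d}") force+
  thus ?thesis by blast
qed

lemma scaled_bound:
  "\<forall>s. \<bar>w s\<bar> \<le> (B::real) \<Longrightarrow> \<forall>s. \<bar>c * w s\<bar> \<le> \<bar>c\<bar> * B"
  by (simp add: abs_mult mult_left_mono)

lemma Vhat_bound:
  assumes a: "a > 0" and c: "charge_class a \<rho>" and d: "0 < \<delta>" "\<delta> < 1" and m: "0 \<le> mu \<beta> lam \<delta>"
    and k: "k \<noteq> 0"
    and hT: "(cmod (psi_plus a \<beta> lam \<delta> k - psi_minus a \<beta> lam \<delta> k / complex_of_real \<bar>k\<bar>))\<^sup>2
             \<le> 5 / 2 * (\<delta> + mu \<beta> lam \<delta>)\<^sup>2 * exp (2 * \<bar>k\<bar> * a)"
    and La: "\<delta> + mu \<beta> lam \<delta> \<le> \<Lambda>"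
    and x: "x > a + max (d1 \<rho>) (4 * a)"
    and Y: "\<forall>p\<in>ess_supp \<rho>. \<bar>snd p\<bar> \<le> Y"
  shows "cmod (Vhat_m a \<beta> lam \<delta> \<rho> x k)
          \<le> (\<Lambda> + 1) * ((Y + (d1 \<rho> - d0 \<rho>)) * (LINT p|lborel. \<bar>\<rho> p\<bar>)) * exp (- \<bar>k\<bar> * a)"
proof -
  define K where "K = \<bar>k\<bar>"
  have K: "K > 0" using k unfolding K_def by simp
  define D0 where "D0 = d0 \<rho>"
  define D1 where "D1 = d1 \<rho>"
  define R where "R = D1 - D0"
  define L where "L = (LINT p|lborel. \<bar>\<rho> p\<bar>)"
  define M where "M = (Y + R) * L"
  have aD0: "a < D0" and D01: "D0 \<le> D1" using supp_geom[OF c] unfolding D0_def D1_def by auto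
  have R0: "R \<ge> 0" using D01 unfolding R_def by simp
  have L0: "L \<ge> 0" unfolding L_def by simp
  obtain p0 where "p0 \<in> ess_supp \<rho>" using supp_geom(1)[OF c] by auto
  hence Y0: "Y \<ge> 0" using Y by force
  have M0: "M \<ge> 0" unfolding M_def using Y0 R0 L0 by simp
  have xD1: "x - D1 > a" and x5: "x > 5 * a" using x unfolding D1_def by auto
  have La0: "\<Lambda> \<ge> 0" using La d m by linarith
  define wm where "wm = (\<lambda>s. indicator {D0..D1} s * exp (- K * s))"
  define wp where "wp = (\<lambda>s. indicator {D0..D1} s * exp (K * s))"
  define wm' where "wm' = (\<lambda>s. indicator {D0..D1} s * exp (- K * (s - D0)))"
  define wp' where "wp' = (\<lambda>s. indicator {D0..D1} s * exp (- K * (D1 - s)))"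
  define wJ where "wJ = (\<lambda>s. indicator {a..x} s * sinh (K * (s - x)))"
  have ct: "continuous_on UNIV (\<lambda>s. exp (- K * s))" "continuous_on UNIV (\<lambda>s. exp (K * s))"
     "continuous_on UNIV (\<lambda>s. exp (- K * (s - D0)))" "continuous_on UNIV (\<lambda>s. exp (- K * (D1 - s)))"
     "continuous_on UNIV (\<lambda>s. sinh (K * (s - x)))"
    by (intro continuous_intros)+
  note cm = ind_cont_meas[OF ct(1), of D0 D1] ind_cont_meas[OF ct(2), of D0 D1]
    ind_cont_meas[OF ct(3), of D0 D1] ind_cont_meas[OF ct(4), of D0 D1] ind_cont_meas[OF ct(5), of a x]
  have mm: "wm \<in> borel_measurable borel" "wp \<in> borel_measurable borel" "wm' \<in> borel_measurable borel"
    "wp' \<in> borel_measurable borel" "wJ \<in> borel_measurable borel"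
    using cm unfolding wm_def wp_def wm'_def wp'_def wJ_def by auto
  obtain Bm where Bm: "\<forall>s. \<bar>wm s\<bar> \<le> Bm" using ind_cont_bound[OF ct(1)] unfolding wm_def by blast
  obtain Bp where Bp: "\<forall>s. \<bar>wp s\<bar> \<le> Bp" using ind_cont_bound[OF ct(2)] unfolding wp_def by blast
  obtain Bm' where Bm': "\<forall>s. \<bar>wm' s\<bar> \<le> Bm'" using ind_cont_bound[OF ct(3)] unfolding wm'_def by blast
  obtain Bp' where Bp': "\<forall>s. \<bar>wp' s\<bar> \<le> Bp'" using ind_cont_bound[OF ct(4)] unfolding wp'_def by blast
  obtain BJ where BJ: "\<forall>s. \<bar>wJ s\<bar> \<le> BJ" using ind_cont_bound[OF ct(5)] unfolding wJ_def by blast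
  have IkPhi: "I_k \<rho> k = Phi \<rho> k wm"
  proof -
    have "I_k \<rho> k = (LINT s|lborel. complex_of_real (wm s) * rho_hat \<rho> s k)"
      unfolding I_k_def set_lebesgue_integral_def wm_def K_def D0_def D1_def
      by (intro Bochner_Integration.integral_cong) (auto simp: scaleR_conv_of_real mult_ac)
    also have "\<dots> = Phi \<rho> k wm" by (rule Phi_fubini[OF c mm(1) Bm])
    finally show ?thesis .
  qed
  have JPhi: "(LINT x':{a..x}|lborel. complex_of_real (sinh (\<bar>k\<bar> * (x' - x))) * rho_hat \<rho> x' k) = Phi \<rho> k wJ"
  proof -
    have "(LINT x':{a..x}|lborel. complex_of_real (sinh (\<bar>k\<bar> * (x' - x))) * rho_hat \<rho> x' k)
        = (LINT s|lborel. complex_of_real (wJ s) * rho_hat \<rho> s k)"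
      unfolding set_lebesgue_integral_def wJ_def K_def
      by (intro Bochner_Integration.integral_cong) (auto simp: scaleR_conv_of_real mult_ac)
    also have "\<dots> = Phi \<rho> k wJ" by (rule Phi_fubini[OF c mm(5) BJ])
    finally show ?thesis .
  qed
  have JPhi2: "Phi \<rho> k wJ = complex_of_real (exp (- K * x) / 2) * Phi \<rho> k wp
       + complex_of_real (- (exp (K * x) / 2)) * Phi \<rho> k wm"
  proof -
    have "Phi \<rho> k wJ = Phi \<rho> k (\<lambda>s. exp (- K * x) / 2 * wp s + (- (exp (K * x) / 2)) * wm s)"
    proof (rule Phi_cong[OF c mm(5)])
      show "(\<lambda>s. exp (- K * x) / 2 * wp s + - (exp (K * x) / 2) * wm s) \<in> borel_measurable borel"
        by (intro borel_measurable_add borel_measurable_times borel_measurable_const mm(1) mm(2))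
      show "\<forall>s\<in>{d0 \<rho>..d1 \<rho>}. wJ s = exp (- K * x) / 2 * wp s + - (exp (K * x) / 2) * wm s"
      proof
        fix s assume s: "s \<in> {d0 \<rho>..d1 \<rho>}"
        hence "s \<in> {a..x}" using aD0 xD1 a unfolding D0_def D1_def by auto
        thus "wJ s = exp (- K * x) / 2 * wp s + - (exp (K * x) / 2) * wm s"
        proof -
          have e1: "exp (K * (s - x)) = exp (- K * x) * exp (K * s)" by (simp add: mult_exp_exp algebra_simps)
          have e2: "exp (- (K * (s - x))) = exp (K * x) * exp (- K * s)" by (simp add: mult_exp_exp algebra_simps)
          show ?thesis using s \<open>s \<in> {a..x}\<close> unfolding wJ_def wp_def wm_def D0_def D1_def sinh_def e1 e2
            by (simp add: field_simps)
        qed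
      qed
    qed
    also have "\<dots> = Phi \<rho> k (\<lambda>s. exp (- K * x) / 2 * wp s) + Phi \<rho> k (\<lambda>s. (- (exp (K * x) / 2)) * wm s)"
      by (rule Phi_add[OF c _ scaled_bound[OF Bp] _ scaled_bound[OF Bm]]) (intro borel_measurable_times borel_measurable_const mm)+
    also have "\<dots> = complex_of_real (exp (- K * x) / 2) * Phi \<rho> k wp
       + complex_of_real (- (exp (K * x) / 2)) * Phi \<rho> k wm"
      by (simp only: Phi_scale)
    finally show ?thesis .
  qed
  have wmeq: "Phi \<rho> k wm = complex_of_real (exp (- K * D0)) * Phi \<rho> k wm'"
  proof -
    have "wm = (\<lambda>s. exp (- K * D0) * wm' s)"
      unfolding wm_def wm'_def by (rule ext) (simp add: mult_exp_exp algebra_simps)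
    thus ?thesis by (simp add: Phi_scale)
  qed
  have wpeq: "Phi \<rho> k wp = complex_of_real (exp (K * D1)) * Phi \<rho> k wp'"
  proof -
    have "wp = (\<lambda>s. exp (K * D1) * wp' s)"
      unfolding wp_def wp'_def by (rule ext) (simp add: mult_exp_exp algebra_simps)
    thus ?thesis by (simp add: Phi_scale)
  qed
  have expb: "exp (- u) \<le> 1 \<and> \<bar>exp (- u) - 1\<bar> \<le> u" if "u \<ge> 0" for u :: real
  proof -
    have "1 + (- u) \<le> exp (- u)" by (rule exp_ge_add_one_self)
    moreover have "exp (- u) \<le> 1" using that by simp
    ultimately show ?thesis by (simp add: abs_if)
  qed
  have bm': "cmod (Phi \<rho> k wm') \<le> K * (Y + R) * L"
  proof -
    have "\<forall>s\<in>{d0 \<rho>..d1 \<rho>}. \<bar>wm' s\<bar> \<le> 1 \<and> \<bar>wm' s - 1\<bar> \<le> \<bar>k\<bar> * R"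
    proof
      fix s assume s: "s \<in> {d0 \<rho>..d1 \<rho>}"
      have u0: "K * (s - D0) \<ge> 0" using s K unfolding D0_def by simp
      have uR: "K * (s - D0) \<le> K * R" using s K unfolding D0_def D1_def R_def by (intro mult_left_mono) auto
      have "wm' s = exp (- (K * (s - D0)))" using s unfolding wm'_def D0_def D1_def by simp
      thus "\<bar>wm' s\<bar> \<le> 1 \<and> \<bar>wm' s - 1\<bar> \<le> \<bar>k\<bar> * R"
        using expb[OF u0] uR unfolding K_def by auto
    qed
    from Phi_bound[OF c mm(3) Bm' this Y] show ?thesis unfolding K_def L_def by simp
  qed
  have bp': "cmod (Phi \<rho> k wp') \<le> K * (Y + R) * L"
  proof -
    have "\<forall>s\<in>{d0 \<rho>..d1 \<rho>}. \<bar>wp' s\<bar> \<le> 1 \<and> \<bar>wp' s - 1\<bar> \<le> \<bar>k\<bar> * R"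
    proof
      fix s assume s: "s \<in> {d0 \<rho>..d1 \<rho>}"
      have u0: "K * (D1 - s) \<ge> 0" using s K unfolding D1_def by simp
      have uR: "K * (D1 - s) \<le> K * R" using s K unfolding D0_def D1_def R_def by (intro mult_left_mono) auto
      have "wp' s = exp (- (K * (D1 - s)))" using s unfolding wp'_def D0_def D1_def by simp
      thus "\<bar>wp' s\<bar> \<le> 1 \<and> \<bar>wp' s - 1\<bar> \<le> \<bar>k\<bar> * R"
        using expb[OF u0] uR unfolding K_def by auto
    qed
    from Phi_bound[OF c mm(4) Bp' this Y] show ?thesis unfolding K_def L_def by simp
  qed
  define P where "P = psi_plus a \<beta> lam \<delta> k"
  define Q where "Q = psi_minus a \<beta> lam \<delta> k"
  define A where "A = A_k a \<beta> lam \<delta> \<rho> k"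
  define S where "S = P + Q / complex_of_real K"
  define T where "T = P - Q / complex_of_real K"
  define ea where "ea = exp (K * a)"
  have ea0: "ea > 0" unfolding ea_def by simp
  have Slow: "exp (- K * a) \<le> cmod S"
    using S_lower[OF d m k] unfolding S_def P_def Q_def K_def .
  have eKa: "exp (- K * a) = 1 / ea" unfolding ea_def by (simp add: exp_minus inverse_eq_divide)
  have Kc: "complex_of_real K \<noteq> 0" using K by simp
  have KPQ: "complex_of_real K * P + Q = complex_of_real K * S" unfolding S_def using Kc by (simp add: field_simps)
  have Snz: "S \<noteq> 0" using Slow by (auto simp: eKa)
  have nz: "complex_of_real K * P + Q \<noteq> 0" unfolding KPQ using Kc Snz by simp
  have Adef: "A = I_k \<rho> k / (complex_of_real (exp (- K * a)) * (complex_of_real K * P + Q))"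
    unfolding A_def A_k_def K_def P_def Q_def ..
  have V1: "Vhat_m a \<beta> lam \<delta> \<rho> x k = A * P * complex_of_real (cosh (K * (x - a)))
      + A * Q / complex_of_real K * complex_of_real (sinh (K * (x - a)))
      + 1 / complex_of_real K * (complex_of_real (exp (- K * x) / 2) * Phi \<rho> k wp
          + complex_of_real (- (exp (K * x) / 2)) * I_k \<rho> k)"
    unfolding Vhat_m_def JPhi JPhi2 IkPhi A_def P_def Q_def K_def ..
  have V2: "Vhat_m a \<beta> lam \<delta> \<rho> x k = A * T * complex_of_real (exp (- (K * (x - a)))) / 2
       + complex_of_real (exp (- K * x) / (2 * K)) * Phi \<rho> k wp"
    unfolding V1 T_def by (rule vhat_algebra[OF K nz Adef])
  have nIk: "cmod (I_k \<rho> k) \<le> K * M"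
  proof -
    have "exp (- K * D0) \<le> 1" using K aD0 a by simp
    hence "cmod (I_k \<rho> k) \<le> 1 * (K * M)"
      unfolding IkPhi wmeq norm_mult norm_of_real M_def using bm'
      by (intro mult_mono) (auto simp: mult.assoc)
    thus ?thesis by simp
  qed
  have nA: "cmod A \<le> M * ea\<^sup>2"
  proof -
    have "cmod A = cmod (I_k \<rho> k) / (exp (- K * a) * (K * cmod S))"
      unfolding Adef KPQ using K by (simp add: norm_mult norm_divide)
    also have "\<dots> \<le> (K * M) / (exp (- K * a) * (K * exp (- K * a)))"
      using nIk Slow K M0 by (intro frac_le mult_left_mono) auto
    also have "\<dots> = M * ea\<^sup>2" using K ea0 unfolding eKa by (simp add: field_simps power2_eq_square)
    finally show ?thesis .
  qed
  have nT: "cmod T \<le> 2 * \<Lambda> * ea"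
  proof (rule power2_le_imp_le)
    have "(cmod T)\<^sup>2 \<le> 5 / 2 * (\<delta> + mu \<beta> lam \<delta>)\<^sup>2 * ea\<^sup>2"
      using hT unfolding T_def P_def Q_def K_def ea_def by (simp add: exp_double[symmetric] mult.assoc)
    also have "\<dots> \<le> 4 * \<Lambda>\<^sup>2 * ea\<^sup>2"
    proof -
      have "(\<delta> + mu \<beta> lam \<delta>)\<^sup>2 \<le> \<Lambda>\<^sup>2" using La d m by (intro power_mono) auto
      moreover have "0 \<le> (\<delta> + mu \<beta> lam \<delta>)\<^sup>2" by simp
      ultimately have "5 / 2 * (\<delta> + mu \<beta> lam \<delta>)\<^sup>2 \<le> 4 * \<Lambda>\<^sup>2" by linarith
      thus ?thesis by (intro mult_right_mono) auto
    qed
    also have "\<dots> = (2 * \<Lambda> * ea)\<^sup>2" by (simp add: power2_eq_square)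
    finally show "(cmod T)\<^sup>2 \<le> (2 * \<Lambda> * ea)\<^sup>2" .
    show "0 \<le> 2 * \<Lambda> * ea" using La0 ea0 by simp
  qed
  have t1: "cmod (A * T * complex_of_real (exp (- (K * (x - a)))) / 2) \<le> M * \<Lambda> * exp (- K * a)"
  proof -
    have "cmod (A * T * complex_of_real (exp (- (K * (x - a)))) / 2) = cmod A * cmod T * exp (- (K * (x - a))) / 2"
      by (simp add: norm_mult norm_divide)
    also have "\<dots> \<le> (M * ea\<^sup>2) * (2 * \<Lambda> * ea) * exp (- (K * (x - a))) / 2"
      using nA nT M0 by (intro divide_right_mono mult_right_mono mult_mono) auto
    also have "\<dots> = M * \<Lambda> * exp (4 * K * a - K * x)"
      unfolding ea_def by (simp add: power2_eq_square mult_exp_exp algebra_simps)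
    also have "\<dots> \<le> M * \<Lambda> * exp (- K * a)"
      using M0 La0 K x5 by (intro mult_left_mono) (auto simp: mult_left_mono)
    finally show ?thesis .
  qed
  have t2: "cmod (complex_of_real (exp (- K * x) / (2 * K)) * Phi \<rho> k wp) \<le> M / 2 * exp (- K * a)"
  proof -
    have "cmod (complex_of_real (exp (- K * x) / (2 * K)) * Phi \<rho> k wp)
        = exp (- K * x) / (2 * K) * exp (K * D1) * cmod (Phi \<rho> k wp')"
      unfolding wpeq using K by (simp only: norm_mult norm_of_real mult.assoc) (simp add: abs_of_pos)
    also have "\<dots> \<le> exp (- K * x) / (2 * K) * exp (K * D1) * (K * M)"
      using bp' K unfolding M_def by (intro mult_left_mono) (auto simp: mult.assoc)
    also have "\<dots> = M / 2 * exp (- (K * (x - D1)))"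
      using K by (simp add: mult_exp_exp field_simps)
    also have "\<dots> \<le> M / 2 * exp (- K * a)"
      using M0 K xD1 by (intro mult_left_mono) (auto simp: mult_left_mono)
    finally show ?thesis .
  qed
  have "cmod (Vhat_m a \<beta> lam \<delta> \<rho> x k) \<le> M * \<Lambda> * exp (- K * a) + M / 2 * exp (- K * a)"
    unfolding V2 using t1 t2 norm_triangle_le by (metis add_mono)
  also have "\<dots> \<le> (\<Lambda> + 1) * M * exp (- K * a)"
    using M0 by (simp add: algebra_simps)
  finally show ?thesis unfolding M_def K_def R_def L_def D0_def D1_def .
qed

theorem lemma6p5:
  fixes a \<beta> lam \<delta>\<mu> \<delta>\<psi> :: real and \<rho> :: "real \<times> real \<Rightarrow> real"
  assumes "a > 0"
    and "feasible \<beta> lam"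
    and "0 < \<delta>\<mu>" and "\<delta>\<mu> < 1"
    and "\<forall>\<delta>. 0 < \<delta> \<and> \<delta> \<le> \<delta>\<mu> \<longrightarrow> mu \<beta> lam \<delta> \<ge> 0"
    and "0 < \<delta>\<psi>" and "\<delta>\<psi> \<le> \<delta>\<mu>"
    and "\<forall>\<delta> k. 0 < \<delta> \<and> \<delta> \<le> \<delta>\<psi> \<and> k \<noteq> 0 \<longrightarrow>
           (cmod (psi_plus a \<beta> lam \<delta> k - psi_minus a \<beta> lam \<delta> k / complex_of_real \<bar>k\<bar>))\<^sup>2
             \<le> 5 / 2 * (\<delta> + mu \<beta> lam \<delta>)\<^sup>2 * exp (2 * \<bar>k\<bar> * a)"
    and "charge_class a \<rho>"
  shows "\<exists>C10 > 0. \<forall>\<delta> x y. 0 < \<delta> \<and> \<delta> \<le> \<delta>\<psi> \<and> x > a + max (d1 \<rho>) (4 * a) \<longrightarrow>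
           cmod (V_m a \<beta> lam \<delta> \<rho> x y) \<le> C10"
proof -
  note a = assms(1) and c = assms(9)
  obtain Y where Y: "\<forall>p\<in>ess_supp \<rho>. \<bar>snd p\<bar> \<le> Y" using supp_geom(5)[OF c] by blast
  have bpos: "\<beta> > 0" using assms(2) by (simp add: feasible_def)
  define \<Lambda> where "\<Lambda> = 2 + \<bar>lam\<bar>"
  define G where "G = (\<Lambda> + 1) * ((Y + (d1 \<rho> - d0 \<rho>)) * (LINT p|lborel. \<bar>\<rho> p\<bar>))"
  obtain p0 where "p0 \<in> ess_supp \<rho>" using supp_geom(1)[OF c] by auto
  hence Y0: "Y \<ge> 0" using Y by force
  have G0: "G \<ge> 0" unfolding G_def \<Lambda>_def using Y0 supp_geom(4)[OF c] by simp
  define h where "h = (\<lambda>k::real. indicator {0<..} k * exp (- (k * a)) + indicator {0<..} (- k) * exp (- ((- k) * a)))"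
  have hi: "integrable lborel h"
  proof -
    have i1: "integrable lborel (\<lambda>k::real. indicator {0<..} k * exp (- (k * a)))"
      using integrable_I0i_exp_mscale[OF a] by (simp add: set_integrable_def)
    have i2: "integrable lborel (\<lambda>k::real. indicator {0<..} (0 + (-1) * k) * exp (- ((0 + (-1) * k) * a)))"
      using lborel_integrable_real_affine_iff[of "-1" "\<lambda>k::real. indicator {0<..} k * exp (- (k * a))" 0] i1
      by simp
    show ?thesis unfolding h_def using Bochner_Integration.integrable_add[OF i1 i2] by simp
  qed
  have h0: "h k \<ge> 0" for k unfolding h_def by simp
  have hk: "h k = exp (- \<bar>k\<bar> * a)" if "k \<noteq> 0" for k
    using that unfolding h_def by (cases "k > 0") (auto simp: indicator_def)
  define C10 where "C10 = 1 / (2 * pi) * (LINT k|lborel. G * h k) + 1"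
  have "(LINT k|lborel. G * h k) \<ge> 0" using G0 h0 by simp
  hence "1 / (2 * pi) * (LINT k|lborel. G * h k) \<ge> 0" by simp
  hence C0: "C10 > 0" unfolding C10_def by linarith
  show ?thesis
  proof (intro exI[of _ C10] conjI allI impI C0)
    fix \<delta> x y assume h: "0 < \<delta> \<and> \<delta> \<le> \<delta>\<psi> \<and> x > a + max (d1 \<rho>) (4 * a)"
    have d: "0 < \<delta>" "\<delta> < 1" using h assms(4,7) by auto
    have m: "0 \<le> mu \<beta> lam \<delta>" using assms(5,7) h by auto
    have La: "\<delta> + mu \<beta> lam \<delta> \<le> \<Lambda>"
    proof -
      have "\<delta> powr \<beta> \<le> 1" using d bpos by (intro powr_le1) auto
      moreover have "\<delta> powr \<beta> \<ge> 0" by simp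
      ultimately have "lam * \<delta> powr \<beta> \<le> \<bar>lam\<bar>"
        by (metis abs_ge_self abs_mult abs_of_nonneg mult_left_le order_trans abs_ge_zero)
      thus ?thesis unfolding mu_def \<Lambda>_def using d by linarith
    qed
    have pw: "cmod (Vhat_m a \<beta> lam \<delta> \<rho> x k) \<le> G * h k" for k
    proof (cases "k = 0")
      case True
      thus ?thesis using G0 h0[of k]
        by (simp add: Vhat_m_def A_k_def psi_minus_def)
    next
      case False
      have hT: "(cmod (psi_plus a \<beta> lam \<delta> k - psi_minus a \<beta> lam \<delta> k / complex_of_real \<bar>k\<bar>))\<^sup>2
             \<le> 5 / 2 * (\<delta> + mu \<beta> lam \<delta>)\<^sup>2 * exp (2 * \<bar>k\<bar> * a)"
        using assms(8) h False by blast
      show ?thesis using Vhat_bound[OF a c d m False hT La _ Y] h hk[OF False]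
        unfolding G_def by simp
    qed
    have "cmod (V_m a \<beta> lam \<delta> \<rho> x y)
        = 1 / (2 * pi) * cmod (LINT k|lborel. Vhat_m a \<beta> lam \<delta> \<rho> x k * cis (k * y))"
      unfolding V_m_def by (simp add: norm_mult norm_divide)
    also have "\<dots> \<le> 1 / (2 * pi) * (LINT k|lborel. cmod (Vhat_m a \<beta> lam \<delta> \<rho> x k * cis (k * y)))"
      by (intro mult_left_mono integral_norm_bound) auto
    also have "\<dots> \<le> 1 / (2 * pi) * (LINT k|lborel. G * h k)"
    proof (intro mult_left_mono integral_mono')
      show "integrable lborel (\<lambda>k. G * h k)" using hi by simp
      show "cmod (Vhat_m a \<beta> lam \<delta> \<rho> x k * cis (k * y)) \<le> G * h k" for k
        using pw[of k] by (simp add: norm_mult)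
      show "0 \<le> G * h k" for k using G0 h0 by simp
    qed auto
    also have "\<dots> \<le> C10" unfolding C10_def by simp
    finally show "cmod (V_m a \<beta> lam \<delta> \<rho> x y) \<le> C10" .
  qed
qed

end
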